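(* Let $V$ be a population of $n$ individuals with pseudo-metric $d$, let $k$ be a panel size, and let $\mathcal{G}$ be the output of the Greedy Capture procedure (defined in the context) on $V$ with panel size $k$. Let $\alpha\ge 1$ and let $P\subseteq V$ be such that for every $G\in\mathcal{G}$ there exists $p\in P$ with $d(p,c_G)\le\alpha\cdot r_G$. Then $P$ satisfies $(\alpha+3)$-PFC for population $V$ with panel size $k$.
   Context: $B(x,\delta)=\{u\in V: d(x,u)\le\delta\}$. Greedy Capture with panel size $K$ (Modified Greedy Capture with every individual initially its own group): maintain a set $U$ of uncovered individuals, initially $V$, and an output collection initially empty; increase $\delta$ continuously from $0$ while $U\ne\emptyset$. At each $\delta$: for each already formed group with center $c$, remove $U\cap B(c,\delta)$ from $U$; then, while some $x\in V$ has $|U\cap B(x,\delta)|\ge n/K$, form the group $U\cap B(x,\delta)$ with center $c_G=x$ and radius $r_G=\delta$, add it to the output and remove its members from $U$. A set $P\subseteq V$ satisfies $\gamma$-PFC for population $V$ with panel size $k$ if for every $S\subseteq V$ with $|S|\ge n/k$ there exist $v\in S$, $p\in P$ with $d(v,p)\le\gamma\cdot\min_{y\in V}\max_{u\in S}d(u,y)$. *)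

theory Defs
  imports Complex_Main
begin

definition pseudo_metric_on :: "'a set \<Rightarrow> ('a \<Rightarrow> 'a \<Rightarrow> real) \<Rightarrow> bool" where
  "pseudo_metric_on V d \<longleftrightarrow>
     (\<forall>x\<in>V. d x x = 0) \<and> (\<forall>x\<in>V. \<forall>y\<in>V. d x y = d y x) \<and>
     (\<forall>x\<in>V. \<forall>y\<in>V. \<forall>z\<in>V. d x z \<le> d x y + d y z)"

definition ball_in :: "'a set \<Rightarrow> ('a \<Rightarrow> 'a \<Rightarrow> real) \<Rightarrow> 'a \<Rightarrow> real \<Rightarrow> 'a set" where
  "ball_in V d x \<delta> = {u\<in>V. d x u \<le> \<delta>}"

text \<open>A run of Greedy Capture is recorded as the list of formed groups, in the order
  of formation, each as a triple (G, c_G, r_G).\<close>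
definition gc_uncovered ::
  "'a set \<Rightarrow> ('a \<Rightarrow> 'a \<Rightarrow> real) \<Rightarrow> ('a set \<times> 'a \<times> real) list \<Rightarrow> real \<Rightarrow> 'a set" where
  "gc_uncovered V d gs \<delta> =
     V - (\<Union>(G, c, r)\<in>set gs. G \<union> ball_in V d c \<delta>)"

definition greedy_capture ::
  "'a set \<Rightarrow> ('a \<Rightarrow> 'a \<Rightarrow> real) \<Rightarrow> nat \<Rightarrow> ('a set \<times> 'a \<times> real) list \<Rightarrow> bool" where
  "greedy_capture V d K gs \<longleftrightarrow>
     (\<forall>i<length gs.
        (let (G, c, r) = gs ! i; prev = take i gs;
             lo = (if i = 0 then 0 else snd (snd (gs ! (i - 1)))) in
          c \<in> V \<and> lo \<le> r \<and>
          G = gc_uncovered V d prev r \<inter> ball_in V d c r \<and>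
          real (card G) \<ge> real (card V) / real K \<and>
          (\<forall>\<delta>. lo \<le> \<delta> \<and> \<delta> < r \<longrightarrow>
             (\<forall>x\<in>V. real (card (gc_uncovered V d prev \<delta> \<inter> ball_in V d x \<delta>))
                       < real (card V) / real K)))) \<and>
     (let lo = (if gs = [] then 0 else snd (snd (last gs))) in
       \<forall>\<delta>. lo \<le> \<delta> \<longrightarrow>
         (\<forall>x\<in>V. real (card (gc_uncovered V d gs \<delta> \<inter> ball_in V d x \<delta>))
                   < real (card V) / real K))"

definition PFC :: "'a set \<Rightarrow> ('a \<Rightarrow> 'a \<Rightarrow> real) \<Rightarrow> nat \<Rightarrow> real \<Rightarrow> 'a set \<Rightarrow> bool" where
  "PFC V d k \<gamma> P \<longleftrightarrow>
     (\<forall>S. S \<subseteq> V \<and> S \<noteq> {} \<and> real (card S) \<ge> real (card V) / real k \<longrightarrow>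
        (\<exists>v\<in>S. \<exists>p\<in>P. d v p \<le> \<gamma> * (MIN y\<in>V. MAX u\<in>S. d u y)))"

end

theory Submission
  imports Defs
begin

lemma gc_idx:
  assumes "greedy_capture V d K gs" "i < length gs" "gs ! i = (G,c,r)"
  shows "c \<in> V \<and> G = gc_uncovered V d (take i gs) r \<inter> ball_in V d c r \<and>
    (\<forall>\<delta>. (if i = 0 then 0 else snd (snd (gs ! (i - 1)))) \<le> \<delta> \<and> \<delta> < r \<longrightarrow>
             (\<forall>x\<in>V. real (card (gc_uncovered V d (take i gs) \<delta> \<inter> ball_in V d x \<delta>))
                       < real (card V) / real K))"
proof -
  have "(let (G, c, r) = gs ! i; prev = take i gs;
             lo = (if i = 0 then 0 else snd (snd (gs ! (i - 1)))) in
          c \<in> V \<and> lo \<le> r \<and>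
          G = gc_uncovered V d prev r \<inter> ball_in V d c r \<and>
          real (card G) \<ge> real (card V) / real K \<and>
          (\<forall>\<delta>. lo \<le> \<delta> \<and> \<delta> < r \<longrightarrow>
             (\<forall>x\<in>V. real (card (gc_uncovered V d prev \<delta> \<inter> ball_in V d x \<delta>))
                       < real (card V) / real K)))"
    using assms(1,2) unfolding greedy_capture_def by blast
  then show ?thesis using assms(3) by (simp add: Let_def)
qed

lemma gc_last:
  assumes "greedy_capture V d K gs"
  shows "\<forall>\<delta>. (if gs = [] then 0 else snd (snd (last gs))) \<le> \<delta> \<longrightarrow>
         (\<forall>x\<in>V. real (card (gc_uncovered V d gs \<delta> \<inter> ball_in V d x \<delta>))
                   < real (card V) / real K)"
  using assms unfolding greedy_capture_def Let_def by blast

theorem lemma7: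
  fixes V :: "'a set" and d :: "'a \<Rightarrow> 'a \<Rightarrow> real" and k :: nat
    and gs :: "('a set \<times> 'a \<times> real) list" and \<alpha> :: real and P :: "'a set"
  assumes "finite V" and "V \<noteq> {}" and "pseudo_metric_on V d" and "k \<ge> 1"
    and "greedy_capture V d k gs"
    and "\<alpha> \<ge> 1" and "P \<subseteq> V"
    and "\<forall>(G, c, r)\<in>set gs. \<exists>p\<in>P. d p c \<le> \<alpha> * r"
  shows "PFC V d k (\<alpha> + 3) P"
  unfolding PFC_def
proof (intro allI impI)
  fix S assume S: "S \<subseteq> V \<and> S \<noteq> {} \<and> real (card S) \<ge> real (card V) / real k"
  have fS: "finite S" using S assms(1) finite_subset by blast
  have sym: "\<And>x y. x \<in> V \<Longrightarrow> y \<in> V \<Longrightarrow> d x y = d y x"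
    using assms(3) unfolding pseudo_metric_on_def by blast
  have tri: "\<And>x y z. x \<in> V \<Longrightarrow> y \<in> V \<Longrightarrow> z \<in> V \<Longrightarrow> d x z \<le> d x y + d y z"
    using assms(3) unfolding pseudo_metric_on_def by blast
  have refl: "\<And>x. x \<in> V \<Longrightarrow> d x x = 0"
    using assms(3) unfolding pseudo_metric_on_def by blast
  have nonneg: "\<And>x y. x \<in> V \<Longrightarrow> y \<in> V \<Longrightarrow> 0 \<le> d x y"
  proof -
    fix x y assume a: "x \<in> V" "y \<in> V"
    have "d x x \<le> d x y + d y x" using tri a by blast
    then show "0 \<le> d x y" using refl[OF a(1)] sym[OF a] by simp
  qed
  define R where "R = (MIN y\<in>V. MAX u\<in>S. d u y)"
  have "R \<in> (\<lambda>y. MAX u\<in>S. d u y) ` V" unfolding R_def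
    using assms(1,2) by (intro Min_in) auto
  then obtain y where y: "y \<in> V" "(MAX u\<in>S. d u y) = R" by auto
  have Sball: "\<And>u. u \<in> S \<Longrightarrow> d y u \<le> R"
  proof -
    fix u assume u: "u \<in> S"
    have "d u y \<le> (MAX u\<in>S. d u y)" using fS u by (intro Max_ge) auto
    then show "d y u \<le> R" using y sym u S by auto
  qed
  obtain u0 where "u0 \<in> S" using S by auto
  hence R0: "0 \<le> R" using Sball[of u0] nonneg[of y u0] y S by auto
  have key: "\<exists>j<length gs. snd (snd (gs!j)) \<le> R \<and>
      (\<exists>u\<in>S. u \<in> fst (gs!j) \<or> d (fst (snd (gs!j))) u \<le> R)"
  proof (rule ccontr)
    assume H: "\<not> ?thesis"
    have sub: "S \<subseteq> gc_uncovered V d (take i gs) R \<inter> ball_in V d y R"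
      if "i \<le> length gs" "\<forall>j<i. snd (snd (gs!j)) \<le> R" for i
    proof
      fix u assume u: "u \<in> S"
      have "u \<notin> G \<union> ball_in V d c R" if mem: "(G, c, r) \<in> set (take i gs)" for G c r
      proof -
        obtain j where j: "j < length (take i gs)" "take i gs ! j = (G,c,r)"
          using mem unfolding in_set_conv_nth by blast
        have "j < i" "j < length gs" "gs ! j = (G,c,r)" using j by auto
        then show ?thesis using H \<open>\<forall>j<i. snd (snd (gs!j)) \<le> R\<close> u
          by (fastforce simp: ball_in_def)
      qed
      then show "u \<in> gc_uncovered V d (take i gs) R \<inter> ball_in V d y R"
        using u S Sball[OF u] by (auto simp: gc_uncovered_def ball_in_def)
    qed
    have cardle: "real (card S) \<le> real (card (gc_uncovered V d (take i gs) R \<inter> ball_in V d y R))"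
      if "i \<le> length gs" "\<forall>j<i. snd (snd (gs!j)) \<le> R" for i
    proof -
      have "finite (gc_uncovered V d (take i gs) R \<inter> ball_in V d y R)"
        using assms(1) by (auto simp: gc_uncovered_def)
      then show ?thesis using sub[OF that] card_mono by auto
    qed
    show False
    proof (cases "\<exists>j<length gs. R < snd (snd (gs!j))")
      case True
      define i where "i = (LEAST j. j < length gs \<and> R < snd (snd (gs!j)))"
      have i1: "i < length gs \<and> R < snd (snd (gs!i))"
        unfolding i_def using True by (rule LeastI_ex)
      have i2: "\<forall>j<i. snd (snd (gs!j)) \<le> R"
      proof (intro allI impI)
        fix j assume "j < i"
        hence "\<not> (j < length gs \<and> R < snd (snd (gs!j)))"
          unfolding i_def by (rule not_less_Least)
        then show "snd (snd (gs!j)) \<le> R" using \<open>j < i\<close> i1 by auto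
      qed
      obtain G c r where gi: "gs ! i = (G,c,r)" by (cases "gs ! i") auto
      have lo: "(if i = 0 then 0 else snd (snd (gs ! (i - 1)))) \<le> R"
        using i2 R0 by auto
      have "real (card (gc_uncovered V d (take i gs) R \<inter> ball_in V d y R)) < real (card V) / real k"
        using gc_idx[OF assms(5) _ gi] i1 gi lo y(1) by auto
      then show False using cardle[of i] i1 i2 S by auto
    next
      case False
      hence all: "\<forall>j<length gs. snd (snd (gs!j)) \<le> R" by auto
      have lo: "(if gs = [] then 0 else snd (snd (last gs))) \<le> R"
        using all R0 by (auto simp: last_conv_nth)
      have "real (card (gc_uncovered V d gs R \<inter> ball_in V d y R)) < real (card V) / real k"
        using gc_last[OF assms(5)] lo y(1) by auto
      then show False using cardle[of "length gs"] all S by auto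
    qed
  qed
  then obtain j u where j: "j < length gs" "snd (snd (gs!j)) \<le> R" "u \<in> S"
      "u \<in> fst (gs!j) \<or> d (fst (snd (gs!j))) u \<le> R" by blast
  obtain G c r where gj: "gs ! j = (G,c,r)" by (cases "gs ! j") auto
  have gcf: "c \<in> V" "G = gc_uncovered V d (take j gs) r \<inter> ball_in V d c r"
    using gc_idx[OF assms(5) j(1) gj] by auto
  have "(G,c,r) \<in> set gs" using j(1) gj by (metis nth_mem)
  then obtain p where p: "p \<in> P" "d p c \<le> \<alpha> * r" using assms(8) by auto
  have uV: "u \<in> V" using j S by auto
  have pV: "p \<in> V" using p assms(7) by auto
  have rR: "r \<le> R" using j gj by auto
  have duc: "d c u \<le> R"
    using j(4) gj gcf rR by (auto simp: ball_in_def)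
  have "d u p \<le> d u c + d c p" using tri uV gcf(1) pV by blast
  also have "\<dots> = d c u + d p c" using sym uV gcf(1) pV by simp
  also have "\<dots> \<le> R + \<alpha> * R"
    using duc p(2) rR assms(6) by (smt (verit) mult_left_mono)
  also have "\<dots> \<le> (\<alpha> + 3) * R" using R0 by (simp add: algebra_simps)
  finally show "\<exists>v\<in>S. \<exists>p\<in>P. d v p \<le> (\<alpha> + 3) * (MIN y\<in>V. MAX u\<in>S. d u y)"
    using j(3) p(1) unfolding R_def by blast
qed

end
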